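(* An idempotent unital commutative semiring is fully elementary if and only if it is Frobenius.
   Context: A semiring $(X,+,0,\cdot)$: $(X,+,0)$ commutative monoid, $(X,\cdot)$ semigroup, distributivity, $0$ absorbing. Unital: has a multiplicative unit; idempotent: $x+x=x$ for all $x$. $X$ is Frobenius if $(x+y)^n=x^n+y^n$ for all $x,y\in X$ and all integers $n\ge1$. Polynomials in $n$ variables are functions $X^n\to X$ represented by formal expressions $\sum_{k} a_k\prod_{j=1}^n x_j^{d_{k,j}}$ ($a_k\in X$). A polynomial is symmetric if represented by an expression which, with each monomial $a_k\prod_j x_j^{d_{k,j}}$, contains all monomials $a_k\prod_j x_{\sigma(j)}^{d_{k,j}}$, $\sigma\in S_n$. $e_j$ is the sum of all products of $j$ distinct variables among $x_1,\dots,x_n$. $X$ is $n$-elementary if every symmetric polynomial $p$ in $n$ variables equals $r(e_1,\dots,e_n)$ (as functions on $X^n$) for some polynomial $r$; fully elementary if $n$-elementary for all $n\in\mathbb{N}$. *)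

theory Defs
  imports "HOL-Combinatorics.Permutations"
begin

text \<open>Unital commutative semiring (0 absorbing); 0 = 1 is NOT excluded.\<close>
class unital_comm_semiring = comm_semiring_0 + comm_monoid_mult

definition idempotent_sr :: "'a::unital_comm_semiring itself \<Rightarrow> bool" where
  "idempotent_sr _ \<longleftrightarrow> (\<forall>x::'a. x + x = x)"

definition frobenius :: "'a::unital_comm_semiring itself \<Rightarrow> bool" where
  "frobenius _ \<longleftrightarrow> (\<forall>(x::'a) y. \<forall>n::nat. n \<ge> 1 \<longrightarrow> (x + y) ^ n = x ^ n + y ^ n)"

text \<open>Formal polynomial expressions: lists of monomials (a, d), coefficient a and
  exponent vector d (a list whose length is the number of variables).\<close>
type_synonym 'a pexpr = "('a \<times> nat list) list"

definition is_pexpr :: "nat \<Rightarrow> 'a pexpr \<Rightarrow> bool" where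
  "is_pexpr n p \<longleftrightarrow> (\<forall>(a, d) \<in> set p. length d = n)"

definition peval :: "'a::unital_comm_semiring pexpr \<Rightarrow> (nat \<Rightarrow> 'a) \<Rightarrow> 'a" where
  "peval p x = (\<Sum>(a, d) \<leftarrow> p. a * (\<Prod>j<length d. x j ^ (d ! j)))"

definition sym_pexpr :: "nat \<Rightarrow> 'a pexpr \<Rightarrow> bool" where
  "sym_pexpr n p \<longleftrightarrow> is_pexpr n p \<and>
     (\<forall>(a, d) \<in> set p. \<forall>\<sigma>. \<sigma> permutes {..<n} \<longrightarrow> (a, map (\<lambda>j. d ! \<sigma> j) [0..<n]) \<in> set p)"

definition esym :: "nat \<Rightarrow> nat \<Rightarrow> (nat \<Rightarrow> 'a::unital_comm_semiring) \<Rightarrow> 'a" where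
  "esym n j x = (\<Sum>S \<in> {S. S \<subseteq> {..<n} \<and> card S = j}. \<Prod>i\<in>S. x i)"

definition n_elementary :: "nat \<Rightarrow> 'a::unital_comm_semiring itself \<Rightarrow> bool" where
  "n_elementary n _ \<longleftrightarrow>
     (\<forall>p :: 'a pexpr. sym_pexpr n p \<longrightarrow>
        (\<exists>r :: 'a pexpr. is_pexpr n r \<and>
           (\<forall>x. peval p x = peval r (\<lambda>j. esym n (Suc j) x))))"

definition fully_elementary :: "'a::unital_comm_semiring itself \<Rightarrow> bool" where
  "fully_elementary T \<longleftrightarrow> (\<forall>n. n_elementary n T)"

end

theory Submission
  imports Defs
begin

definition leq :: "'a::unital_comm_semiring \<Rightarrow> 'a \<Rightarrow> bool" (infix "\<preceq>" 50) where
  "leq u v \<longleftrightarrow> u + v = v"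

lemma leq_mult: "u \<preceq> v \<Longrightarrow> u * w \<preceq> v * w"
  unfolding leq_def by (metis distrib_right)

lemma leq_zero: "0 \<preceq> u" unfolding leq_def by simp

lemma leq_antisym: "u \<preceq> v \<Longrightarrow> v \<preceq> u \<Longrightarrow> u = v"
  unfolding leq_def by (metis add.commute)

lemma leq_trans [trans]: "u \<preceq> v \<Longrightarrow> v \<preceq> w \<Longrightarrow> u \<preceq> w"
  unfolding leq_def by (metis add.assoc)

locale idem_sr =
  fixes ty :: "'a::unital_comm_semiring itself"
  assumes idem: "(x::'a) + x = x"
begin

lemma leq_refl: "(u::'a) \<preceq> u" unfolding leq_def by (simp add: idem)

lemma leq_add: "(u::'a) \<preceq> w \<Longrightarrow> v \<preceq> w \<Longrightarrow> u + v \<preceq> w"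
  unfolding leq_def by (metis add.assoc)

lemma leq_add1: "(u::'a) \<preceq> u + v"
  unfolding leq_def by (metis add.assoc idem)

lemma leq_add2: "(v::'a) \<preceq> u + v"
  using leq_add1 by (metis add.commute)

lemma leq_mult2: "(u::'a) \<preceq> v \<Longrightarrow> w \<preceq> z \<Longrightarrow> u * w \<preceq> v * z"
  by (metis leq_mult leq_trans mult.commute)

lemma leq_power: "(u::'a) \<preceq> v \<Longrightarrow> u ^ m \<preceq> v ^ m"
  by (induction m) (auto simp: leq_refl leq_mult2)

lemma leq_sum_term: "finite A \<Longrightarrow> a \<in> A \<Longrightarrow> (f a::'a) \<preceq> sum f A"
  by (metis leq_add1 sum.remove)

lemma leq_sum_bound: "finite A \<Longrightarrow> (\<And>a. a \<in> A \<Longrightarrow> (f a::'a) \<preceq> v) \<Longrightarrow> sum f A \<preceq> v"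
  by (induction A rule: finite_induct) (auto simp: leq_zero leq_add)

lemma leq_prod: "(\<And>a. a \<in> A \<Longrightarrow> (f a::'a) \<preceq> g a) \<Longrightarrow> prod f A \<preceq> prod g A"
  by (induction A rule: infinite_finite_induct) (auto simp: leq_refl leq_mult2)

lemma leq_list_term: "z \<in> set xs \<Longrightarrow> (f z::'a) \<preceq> sum_list (map f xs)"
  by (induction xs) (auto simp: leq_add1 leq_trans leq_add2)

lemma leq_list_bound: "(\<And>z. z \<in> set xs \<Longrightarrow> (f z::'a) \<preceq> v) \<Longrightarrow> sum_list (map f xs) \<preceq> v"
  by (induction xs) (auto simp: leq_zero leq_add)

lemma sum_const_idem: "finite A \<Longrightarrow> A \<noteq> {} \<Longrightarrow> (\<Sum>a\<in>A. (c::'a)) = c"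
  by (induction A rule: finite_ne_induct) (auto simp: idem)

lemma pow_le_sum_pow: "(u::'a) ^ m + v ^ m \<preceq> (u + v) ^ m"
  by (intro leq_add leq_power leq_add1 leq_add2)

end


lemma esym2_1: "esym 2 1 z = z 0 + z 1"
proof -
  have "{S. S \<subseteq> {..<2::nat} \<and> card S = 1} = {{0},{1}}"
    by (auto simp: card_1_singleton_iff)
  then show ?thesis unfolding esym_def by simp
qed

lemma esym2_2: "esym 2 2 z = z 0 * z 1"
proof -
  have "{S. S \<subseteq> {..<2::nat} \<and> card S = 2} = {{0,1}}"
  proof -
    have "S = {0,1}" if "S \<subseteq> {..<2::nat}" "card S = 2" for S
      using card_subset_eq[of "{..<2::nat}" S] that by (auto simp: lessThan_def numeral_2_eq_2)
    then show ?thesis by auto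
  qed
  then show ?thesis unfolding esym_def by simp
qed

context idem_sr
begin

lemma peval_mono:
  assumes "is_pexpr n r" "\<And>j. j < n \<Longrightarrow> (f j::'a) = 0 \<or> f j = g j"
  shows "peval r f \<preceq> peval r g"
  unfolding peval_def
proof (rule leq_list_bound)
  fix z assume z: "z \<in> set r"
  obtain a d where ad: "z = (a, d)" by force
  with z assms(1) have ld: "length d = n" unfolding is_pexpr_def by auto
  have "(\<Prod>j<length d. f j ^ (d ! j)) \<preceq> (\<Prod>j<length d. g j ^ (d ! j))"
  proof (rule leq_prod)
    fix j assume "j \<in> {..<length d}"
    then have "f j = 0 \<or> f j = g j" using assms(2) ld by auto
    then show "f j ^ (d ! j) \<preceq> g j ^ (d ! j)"
      by (cases "d ! j") (auto simp: leq_refl leq_zero)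
  qed
  then have "a * (\<Prod>j<length d. f j ^ (d ! j)) \<preceq> a * (\<Prod>j<length d. g j ^ (d ! j))"
    by (metis leq_mult mult.commute)
  also have "\<dots> \<preceq> (\<Sum>(a, d)\<leftarrow>r. a * (\<Prod>j<length d. g j ^ (d ! j)))"
    using leq_list_term[OF z, of "\<lambda>(a, d). a * (\<Prod>j<length d. g j ^ (d ! j))"] ad by simp
  finally show "(case z of (a, d) \<Rightarrow> a * (\<Prod>j<length d. f j ^ (d ! j))) \<preceq>
     (\<Sum>(a, d)\<leftarrow>r. a * (\<Prod>j<length d. g j ^ (d ! j)))" using ad leq_trans by simp
qed

lemma elem2_frob:
  assumes "n_elementary 2 ty" "m \<ge> 1"
  shows "((x::'a) + y) ^ m = x ^ m + y ^ m"
proof -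
  define p :: "'a pexpr" where "p = [(1, [m, 0]), (1, [0, m])]"
  have sym: "sym_pexpr 2 p"
    unfolding sym_pexpr_def is_pexpr_def p_def
  proof (intro conjI)
    show "\<forall>(a, d)\<in>set [(1::'a, [m, 0]), (1, [0, m])]. length d = 2" by auto
  next
    show "\<forall>(a, d)\<in>set [(1::'a, [m, 0]), (1, [0, m])].
       \<forall>\<sigma>. \<sigma> permutes {..<2} \<longrightarrow> (a, map (\<lambda>j. d ! \<sigma> j) [0..<2]) \<in> set [(1, [m, 0]), (1, [0, m])]"
    proof -
      have key: "(\<sigma> 0 = 0 \<and> \<sigma> 1 = 1) \<or> (\<sigma> 0 = 1 \<and> \<sigma> 1 = 0)" if s: "\<sigma> permutes {..<2::nat}" for \<sigma>
      proof -
        have s0: "\<sigma> 0 < 2" "\<sigma> 1 < 2" "\<sigma> 0 \<noteq> \<sigma> 1"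
          using permutes_in_image[OF s] permutes_inj[OF s] by (auto simp: inj_def)
        then show ?thesis by auto
      qed
      show ?thesis
        by (auto simp: upt_rec dest!: key)
    qed
  qed
  obtain r :: "'a pexpr" where r: "is_pexpr 2 r" "\<And>z. peval p z = peval r (\<lambda>j. esym 2 (Suc j) z)"
    using assms(1) sym unfolding n_elementary_def by blast
  have pe: "peval p z = z 0 ^ m + z 1 ^ m" for z
    unfolding p_def peval_def by (simp add: numeral_2_eq_2 lessThan_Suc)
  define z1 where "z1 = (\<lambda>j::nat. if j = 0 then x else y)"
  define z2 where "z2 = (\<lambda>j::nat. if j = 0 then x + y else 0)"
  have "peval r (\<lambda>j. esym 2 (Suc j) z2) \<preceq> peval r (\<lambda>j. esym 2 (Suc j) z1)"
  proof (rule peval_mono[OF r(1)])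
    fix j :: nat assume "j < 2"
    then have "j = 0 \<or> j = 1" by auto
    then show "esym 2 (Suc j) z2 = 0 \<or> esym 2 (Suc j) z2 = esym 2 (Suc j) z1"
      using esym2_1[of z1] esym2_1[of z2] esym2_2[of z2]
      by (auto simp: z1_def z2_def numeral_2_eq_2)
  qed
  then have "peval p z2 \<preceq> peval p z1" using r(2) by simp
  moreover have "peval p z2 = (x + y) ^ m" using assms(2) by (cases m) (simp_all add: pe z2_def)
  moreover have "peval p z1 = x ^ m + y ^ m" by (simp add: pe z1_def)
  ultimately show ?thesis using pow_le_sum_pow leq_antisym by metis
qed

end


definition mon :: "nat \<Rightarrow> (nat \<Rightarrow> nat) \<Rightarrow> (nat \<Rightarrow> 'a::unital_comm_semiring) \<Rightarrow> 'a" where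
  "mon n d x = (\<Prod>j<n. x j ^ d j)"

definition orb :: "nat \<Rightarrow> (nat \<Rightarrow> nat) \<Rightarrow> (nat \<Rightarrow> 'a::unital_comm_semiring) \<Rightarrow> 'a" where
  "orb n d x = (\<Sum>\<sigma>\<in>{\<sigma>. \<sigma> permutes {..<n}}. mon n (d \<circ> \<sigma>) x)"

lemma finite_perms: "finite {\<sigma>. \<sigma> permutes {..<n::nat}}"
  by (rule finite_permutations) simp

lemma mon_mult: "mon n f x * mon n g x = mon n (\<lambda>j. f j + g j) x"
  unfolding mon_def by (simp add: prod.distrib[symmetric] power_add)

lemma mon_cong: "(\<And>j. j < n \<Longrightarrow> f j = g j) \<Longrightarrow> mon n f x = mon n g x"
  unfolding mon_def by (rule prod.cong) auto

lemma orb_cong: "(\<And>j. j < n \<Longrightarrow> f j = g j) \<Longrightarrow> orb n f x = orb n g x"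
  unfolding orb_def
proof (rule sum.cong)
  fix \<sigma> assume "\<sigma> \<in> {\<sigma>. \<sigma> permutes {..<n}}" "\<And>j. j < n \<Longrightarrow> f j = g j"
  then show "mon n (f \<circ> \<sigma>) x = mon n (g \<circ> \<sigma>) x"
    by (intro mon_cong) (auto dest: permutes_in_image)
qed simp

lemma mon_indicator: "S \<subseteq> {..<n} \<Longrightarrow> mon n (\<lambda>j. if j \<in> S then 1 else 0) x = (\<Prod>i\<in>S. x i)"
  unfolding mon_def
proof -
  assume S: "S \<subseteq> {..<n}"
  have "(\<Prod>j<n. x j ^ (if j \<in> S then 1 else 0)) = (\<Prod>j<n. if j \<in> S then x j else 1)"
    by (rule prod.cong) auto
  also have "\<dots> = (\<Prod>i\<in>{..<n} \<inter> S. x i)"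
    by (simp add: prod.inter_restrict)
  also have "{..<n} \<inter> S = S" using S by auto
  finally show "(\<Prod>j<n. x j ^ (if j \<in> S then 1 else 0)) = prod x S" by simp
qed

context idem_sr
begin

lemma mon_le_orb: "\<sigma> permutes {..<n} \<Longrightarrow> mon n (d \<circ> \<sigma>) (x::nat \<Rightarrow> 'a) \<preceq> orb n d x"
  unfolding orb_def by (rule leq_sum_term[OF finite_perms]) simp

end

locale frob_sr = idem_sr ty for ty :: "'a::unital_comm_semiring itself" +
  assumes frob: "m \<ge> 1 \<Longrightarrow> ((u::'a) + v) ^ m = u ^ m + v ^ m"
begin

lemma frob2: "(u::'a) ^ a * v \<preceq> u ^ Suc a + v ^ Suc a"
proof -
  have "u ^ a * v \<preceq> (u + v) ^ a * (u + v)"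
    by (intro leq_mult2 leq_power leq_add1 leq_add2)
  also have "\<dots> = u ^ Suc a + v ^ Suc a"
    using frob[of "Suc a" u v] by (simp add: mult.commute)
  finally show ?thesis .
qed

lemma swap2:
  assumes "p \<noteq> q" "p < n" "q < n" "g p = 1" "g q = a" "g1 p = 0" "g1 q = Suc a"
    "g2 p = Suc a" "g2 q = 0" "\<And>j. j \<noteq> p \<Longrightarrow> j \<noteq> q \<Longrightarrow> g1 j = g j"
    "\<And>j. j \<noteq> p \<Longrightarrow> j \<noteq> q \<Longrightarrow> g2 j = g j"
  shows "mon n g (x::nat \<Rightarrow> 'a) \<preceq> mon n g1 x + mon n g2 x"
proof -
  have split: "mon n h x = x p ^ h p * (x q ^ h q * (\<Prod>j\<in>{..<n}-{p}-{q}. x j ^ h j))" for h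
  proof -
    have "mon n h x = x p ^ h p * (\<Prod>j\<in>{..<n}-{p}. x j ^ h j)"
      unfolding mon_def using assms(2) by (simp add: prod.remove)
    also have "(\<Prod>j\<in>{..<n}-{p}. x j ^ h j) = x q ^ h q * (\<Prod>j\<in>{..<n}-{p}-{q}. x j ^ h j)"
      using assms(1,3) by (subst prod.remove[of _ q]) auto
    finally show ?thesis .
  qed
  define R where "R = (\<Prod>j\<in>{..<n}-{p}-{q}. x j ^ g j)"
  have R1: "(\<Prod>j\<in>{..<n}-{p}-{q}. x j ^ g1 j) = R"
    unfolding R_def by (rule prod.cong) (auto simp: assms(10))
  have R2: "(\<Prod>j\<in>{..<n}-{p}-{q}. x j ^ g2 j) = R"
    unfolding R_def by (rule prod.cong) (auto simp: assms(11))
  have "mon n g x = (x q ^ a * x p) * R"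
    using split[of g] unfolding R_def by (simp add: assms mult_ac)
  also have "\<dots> \<preceq> (x q ^ Suc a + x p ^ Suc a) * R"
    by (intro leq_mult frob2)
  also have "\<dots> = mon n g1 x + mon n g2 x"
    using split[of g1] split[of g2] R1 R2 by (simp add: assms distrib_right)
  finally show ?thesis .
qed

end


context frob_sr
begin

lemma core:
  assumes S0: "S0 \<subseteq> {..<n}" and d0: "\<And>j. j \<notin> S0 \<Longrightarrow> j < n \<Longrightarrow> d' j = 0"
  shows "T \<subseteq> {..<n} \<Longrightarrow> card T = card S0 \<Longrightarrow> \<sigma> permutes {..<n} \<Longrightarrow>
    mon n ((\<lambda>j. d' j + (if j \<in> T then 1 else 0)) \<circ> \<sigma>) (x::nat \<Rightarrow> 'a)
      \<preceq> orb n (\<lambda>j. d' j + (if j \<in> S0 then 1 else 0)) x"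
proof (induction "card (T - S0)" arbitrary: T \<sigma> rule: less_induct)
  case less
  have fS0: "finite S0" using S0 finite_subset by blast
  have fT: "finite T" using less.prems(1) finite_subset by blast
  show ?case
  proof (cases "T \<subseteq> S0")
    case True
    then have "T = S0" using card_subset_eq[OF fS0 True] less.prems(2) by simp
    then show ?thesis using mon_le_orb[OF less.prems(3)] by simp
  next
    case False
    then obtain i where i: "i \<in> T" "i \<notin> S0" by blast
    have "\<not> S0 \<subseteq> T"
    proof
      assume "S0 \<subseteq> T"
      then have "S0 = T" using card_subset_eq[OF fT] less.prems(2) by simp
      then show False using False by simp
    qed
    then obtain j where j: "j \<in> S0" "j \<notin> T" by blast
    have ij: "i \<noteq> j" using i j by auto
    have in_: "i < n" "j < n" using i j less.prems(1) S0 by auto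
    define T' where "T' = insert j (T - {i})"
    have T'sub: "T' \<subseteq> {..<n}" using less.prems(1) in_ by (auto simp: T'_def)
    have cT': "card T' = card S0"
    proof -
      have "card T > 0" using fT i card_gt_0_iff by blast
      then show ?thesis using less.prems(2) fT i j by (simp add: T'_def card_insert_disjoint)
    qed
    have "T' - S0 = (T - S0) - {i}" using j i ij by (auto simp: T'_def)
    then have lt: "card (T' - S0) < card (T - S0)"
      using fT i by (metis DiffI card_Diff1_less finite_Diff)
    define \<tau> where "\<tau> = Transposition.transpose i j"
    have \<tau>p: "\<tau> permutes {..<n}" unfolding \<tau>_def using in_ by (intro permutes_swap_id) auto
    have \<tau>\<sigma>: "\<tau> \<circ> \<sigma> permutes {..<n}" using permutes_compose[OF less.prems(3) \<tau>p] .
    define p where "p = inv \<sigma> i"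
    define q where "q = inv \<sigma> j"
    have sp: "\<sigma> p = i" "\<sigma> q = j" unfolding p_def q_def
      using permutes_inverses(1)[OF less.prems(3)] by auto
    have pq: "p \<noteq> q" using sp ij by auto
    have ivp: "inv \<sigma> permutes {..<n}" using permutes_inv[OF less.prems(3)] .
    have pqn: "p < n" "q < n" unfolding p_def q_def
      using permutes_in_image[OF ivp] in_ by auto
    have di: "d' i = 0" using d0 i in_ by auto
    let ?e = "\<lambda>U j. d' j + (if j \<in> U then 1 else (0::nat))"
    have "mon n (?e T \<circ> \<sigma>) x \<preceq> mon n (?e T' \<circ> \<sigma>) x + mon n (?e T' \<circ> (\<tau> \<circ> \<sigma>)) x"
    proof (rule swap2[OF pq pqn, where a = "d' j"])
      show "(?e T \<circ> \<sigma>) p = 1" using sp i di by simp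
      show "(?e T \<circ> \<sigma>) q = d' j" using sp j by simp
      show "(?e T' \<circ> \<sigma>) p = 0" using sp di ij by (simp add: T'_def)
      show "(?e T' \<circ> \<sigma>) q = Suc (d' j)" using sp by (simp add: T'_def)
      show "(?e T' \<circ> (\<tau> \<circ> \<sigma>)) p = Suc (d' j)" using sp by (simp add: T'_def \<tau>_def)
      show "(?e T' \<circ> (\<tau> \<circ> \<sigma>)) q = 0" using sp di ij by (simp add: T'_def \<tau>_def)
    next
      fix k assume k: "k \<noteq> p" "k \<noteq> q"
      have sk: "\<sigma> k \<noteq> i" "\<sigma> k \<noteq> j"
        using k sp permutes_inj[OF less.prems(3)] by (metis injD)+
      show "(?e T' \<circ> \<sigma>) k = (?e T \<circ> \<sigma>) k" using sk by (simp add: T'_def)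
      show "(?e T' \<circ> (\<tau> \<circ> \<sigma>)) k = (?e T \<circ> \<sigma>) k" using sk by (simp add: T'_def \<tau>_def)
    qed
    also have "\<dots> \<preceq> orb n (?e S0) x"
      using less.hyps[OF lt T'sub cT' less.prems(3)] less.hyps[OF lt T'sub cT' \<tau>\<sigma>]
      by (intro leq_add)
    finally show ?thesis .
  qed
qed

end


context frob_sr
begin

lemma esym_orb:
  assumes S0: "S0 \<subseteq> {..<n}" and d0: "\<And>j. j \<notin> S0 \<Longrightarrow> j < n \<Longrightarrow> d' j = 0"
  shows "esym n (card S0) x * orb n d' (x::nat \<Rightarrow> 'a)
    = orb n (\<lambda>j. d' j + (if j \<in> S0 then 1 else 0)) x"
proof -
  define SS where "SS = {S. S \<subseteq> {..<n} \<and> card S = card S0}"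
  define P where "P = {\<sigma>. \<sigma> permutes {..<n}}"
  let ?e = "\<lambda>U j. d' j + (if j \<in> U then 1 else (0::nat))"
  have fSS: "finite SS" unfolding SS_def
    by (rule finite_subset[of _ "Pow {..<n}"]) auto
  have fP: "finite P" unfolding P_def using finite_perms .
  have trm: "(\<Prod>i\<in>S. x i) * mon n (d' \<circ> \<sigma>) x = mon n (?e (\<sigma> ` S) \<circ> \<sigma>) x"
    if S: "S \<in> SS" and s: "\<sigma> \<in> P" for S \<sigma>
  proof -
    have Ss: "S \<subseteq> {..<n}" using S by (simp add: SS_def)
    have inj: "inj \<sigma>" using s permutes_inj by (auto simp: P_def)
    have "(\<Prod>i\<in>S. x i) * mon n (d' \<circ> \<sigma>) x
        = mon n (\<lambda>j. (if j \<in> S then 1 else 0) + (d' \<circ> \<sigma>) j) x"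
      using mon_indicator[OF Ss, of x] mon_mult by metis
    also have "\<dots> = mon n (?e (\<sigma> ` S) \<circ> \<sigma>) x"
      by (rule mon_cong) (simp add: inj_image_mem_iff[OF inj])
    finally show ?thesis .
  qed
  have lhs: "esym n (card S0) x * orb n d' x = (\<Sum>S\<in>SS. \<Sum>\<sigma>\<in>P. mon n (?e (\<sigma> ` S) \<circ> \<sigma>) x)"
  proof -
    have "esym n (card S0) x * orb n d' x = (\<Sum>S\<in>SS. \<Prod>i\<in>S. x i) * (\<Sum>\<sigma>\<in>P. mon n (d' \<circ> \<sigma>) x)"
      unfolding esym_def orb_def SS_def P_def by simp
    also have "\<dots> = (\<Sum>S\<in>SS. \<Sum>\<sigma>\<in>P. (\<Prod>i\<in>S. x i) * mon n (d' \<circ> \<sigma>) x)"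
      by (rule sum_product)
    also have "\<dots> = (\<Sum>S\<in>SS. \<Sum>\<sigma>\<in>P. mon n (?e (\<sigma> ` S) \<circ> \<sigma>) x)"
      by (rule sum.cong[OF refl], rule sum.cong[OF refl], rule trm)
    finally show ?thesis .
  qed
  show ?thesis
  proof (rule leq_antisym)
    show "esym n (card S0) x * orb n d' x \<preceq> orb n (?e S0) x"
      unfolding lhs
    proof (rule leq_sum_bound[OF fSS], rule leq_sum_bound[OF fP])
      fix S \<sigma> assume S: "S \<in> SS" and s: "\<sigma> \<in> P"
      have sp: "\<sigma> permutes {..<n}" using s by (simp add: P_def)
      have Ss: "S \<subseteq> {..<n}" "card S = card S0" using S by (auto simp: SS_def)
      have c1: "\<sigma> ` S \<subseteq> {..<n}" using Ss(1) permutes_image[OF sp] by blast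
      have "inj_on \<sigma> S" using permutes_inj[OF sp] by (rule inj_on_subset) simp
      then have c2: "card (\<sigma> ` S) = card S0"
        using Ss(2) by (simp add: card_image)
      show "mon n (?e (\<sigma> ` S) \<circ> \<sigma>) x \<preceq> orb n (?e S0) x"
        by (rule core[OF S0 d0 c1 c2 sp])
    qed
  next
    show "orb n (?e S0) x \<preceq> esym n (card S0) x * orb n d' x"
    proof -
    have o: "orb n (?e S0) x = (\<Sum>\<sigma>\<in>P. mon n (?e S0 \<circ> \<sigma>) x)"
      by (simp add: orb_def P_def)
    have "(\<Sum>\<sigma>\<in>P. mon n (?e S0 \<circ> \<sigma>) x) \<preceq> (\<Sum>S\<in>SS. \<Sum>\<sigma>\<in>P. mon n (?e (\<sigma> ` S) \<circ> \<sigma>) x)"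
    proof (rule leq_sum_bound[OF fP])
      fix \<sigma> assume s: "\<sigma> \<in> P"
      have sp: "\<sigma> permutes {..<n}" using s by (simp add: P_def)
      have ivp: "inv \<sigma> permutes {..<n}" using permutes_inv[OF sp] .
      define S where "S = inv \<sigma> ` S0"
      have img: "\<sigma> ` S = S0" unfolding S_def image_comp
        using permutes_inverses(1)[OF sp] by (simp add: comp_def)
      have S: "S \<in> SS" unfolding SS_def S_def
        using permutes_image[OF ivp] S0 permutes_inj[OF ivp]
        by (auto simp: card_image inj_on_subset)
      have "mon n (?e S0 \<circ> \<sigma>) x = mon n (?e (\<sigma> ` S) \<circ> \<sigma>) x" using img by simp
      also have "\<dots> \<preceq> (\<Sum>\<sigma>\<in>P. mon n (?e (\<sigma> ` S) \<circ> \<sigma>) x)"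
        by (rule leq_sum_term[OF fP s])
      also have "\<dots> \<preceq> (\<Sum>S\<in>SS. \<Sum>\<sigma>\<in>P. mon n (?e (\<sigma> ` S) \<circ> \<sigma>) x)"
        by (rule leq_sum_term[OF fSS S])
      finally show "mon n (?e S0 \<circ> \<sigma>) x \<preceq> (\<Sum>S\<in>SS. \<Sum>\<sigma>\<in>P. mon n (?e (\<sigma> ` S) \<circ> \<sigma>) x)" .
    qed
    then show ?thesis using o lhs by simp
    qed
  qed
qed

end


context frob_sr
begin

lemma orb_repr:
  "\<exists>c. length c = n \<and> (\<forall>x. orb n d x = (\<Prod>j<n. esym n (Suc j) (x::nat \<Rightarrow> 'a) ^ (c ! j)))"
proof (induction "\<Sum>j<n. d j" arbitrary: d rule: less_induct)
  case less
  show ?case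
  proof (cases "\<forall>j<n. d j = 0")
    case True
    have "orb n d x = 1" for x :: "nat \<Rightarrow> 'a"
    proof -
      have "orb n d x = (\<Sum>\<sigma>\<in>{\<sigma>. \<sigma> permutes {..<n}}. 1)"
        unfolding orb_def
      proof (rule sum.cong[OF refl])
        fix \<sigma> assume "\<sigma> \<in> {\<sigma>. \<sigma> permutes {..<n}}"
        then have "\<And>j. j < n \<Longrightarrow> d (\<sigma> j) = 0" using True permutes_in_image by fastforce
        then show "mon n (d \<circ> \<sigma>) x = 1" unfolding mon_def by simp
      qed
      also have "\<dots> = 1"
        by (rule sum_const_idem[OF finite_perms]) (use permutes_id in blast)
      finally show ?thesis .
    qed
    then show ?thesis by (intro exI[of _ "replicate n 0"]) simp
  next
    case False
    define S0 where "S0 = {j. j < n \<and> 0 < d j}"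
    define d' where "d' = (\<lambda>j. d j - 1)"
    have S0: "S0 \<subseteq> {..<n}" by (auto simp: S0_def)
    have d0: "\<And>j. j \<notin> S0 \<Longrightarrow> j < n \<Longrightarrow> d' j = 0" by (auto simp: S0_def d'_def)
    obtain j0 where j0: "j0 < n" "d j0 \<noteq> 0" using False by blast
    have lt: "(\<Sum>j<n. d' j) < (\<Sum>j<n. d j)"
      by (rule sum_strict_mono_ex1) (use j0 in \<open>auto simp: d'_def intro!: bexI[of _ j0]\<close>)
    obtain c' where c': "length c' = n" "\<And>x. orb n d' x = (\<Prod>j<n. esym n (Suc j) (x::nat \<Rightarrow> 'a) ^ (c' ! j))"
      using less.hyps[OF lt] by blast
    define k where "k = card S0"
    have "j0 \<in> S0" using j0 by (auto simp: S0_def)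
    then have k1: "k \<ge> 1" using finite_subset[OF S0] by (auto simp: k_def card_gt_0_iff Suc_le_eq)
    have kn: "k \<le> n" using card_mono[OF _ S0] by (simp add: k_def)
    define c where "c = c'[k - 1 := Suc (c' ! (k - 1))]"
    have kin: "k - 1 \<in> {..<n}" using k1 kn by auto
    have "orb n d x = (\<Prod>j<n. esym n (Suc j) x ^ (c ! j))" for x :: "nat \<Rightarrow> 'a"
    proof -
      have "orb n d x = orb n (\<lambda>j. d' j + (if j \<in> S0 then 1 else 0)) x"
        by (rule orb_cong) (auto simp: S0_def d'_def)
      also have "\<dots> = esym n k x * orb n d' x"
        using esym_orb[OF S0 d0] by (simp add: k_def)
      also have "\<dots> = esym n k x * (\<Prod>j<n. esym n (Suc j) x ^ (c' ! j))" by (simp add: c')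
      also have "(\<Prod>j<n. esym n (Suc j) x ^ (c' ! j))
          = esym n (Suc (k - 1)) x ^ (c' ! (k - 1)) * (\<Prod>j\<in>{..<n} - {k - 1}. esym n (Suc j) x ^ (c' ! j))"
        using kin by (simp add: prod.remove)
      also have "(\<Prod>j\<in>{..<n} - {k - 1}. esym n (Suc j) x ^ (c' ! j)) = (\<Prod>j\<in>{..<n} - {k - 1}. esym n (Suc j) x ^ (c ! j))"
        by (rule prod.cong) (auto simp: c_def)
      also have "esym n k x * (esym n (Suc (k - 1)) x ^ (c' ! (k - 1)) * (\<Prod>j\<in>{..<n} - {k - 1}. esym n (Suc j) x ^ (c ! j)))
          = esym n (Suc (k - 1)) x ^ (c ! (k - 1)) * (\<Prod>j\<in>{..<n} - {k - 1}. esym n (Suc j) x ^ (c ! j))"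
        using k1 kin c' by (simp add: c_def mult.assoc)
      also have "\<dots> = (\<Prod>j<n. esym n (Suc j) x ^ (c ! j))"
        using kin by (simp add: prod.remove)
      finally show ?thesis .
    qed
    then show ?thesis using c' by (intro exI[of _ c]) (simp add: c_def)
  qed
qed

lemma frob_elementary: "n_elementary n ty"
  unfolding n_elementary_def
proof (intro allI impI)
  fix p :: "'a pexpr" assume sym: "sym_pexpr n p"
  have len: "\<And>a d. (a, d) \<in> set p \<Longrightarrow> length d = n"
    using sym unfolding sym_pexpr_def is_pexpr_def by auto
  define C where "C = (\<lambda>d::nat list. SOME c. length c = n \<and>
      (\<forall>x. orb n (\<lambda>j. d ! j) x = (\<Prod>j<n. esym n (Suc j) (x::nat \<Rightarrow> 'a) ^ (c ! j))))"
  have C: "length (C d) = n \<and> (\<forall>x. orb n (\<lambda>j. d ! j) x = (\<Prod>j<n. esym n (Suc j) (x::nat \<Rightarrow> 'a) ^ (C d ! j)))" for d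
    unfolding C_def by (rule someI_ex) (rule orb_repr)
  define r where "r = map (\<lambda>(a, d). (a, C d)) p"
  have isr: "is_pexpr n r" unfolding r_def is_pexpr_def using C by auto
  have "peval p x = peval r (\<lambda>j. esym n (Suc j) x)" for x
  proof -
    have pr: "peval r (\<lambda>j. esym n (Suc j) x) = (\<Sum>(a, d)\<leftarrow>p. a * orb n (\<lambda>j. d ! j) x)"
      unfolding peval_def r_def
      by (induction p) (auto simp: C)
    have pp: "peval p x = (\<Sum>(a, d)\<leftarrow>p. a * mon n (\<lambda>j. d ! j) x)"
      unfolding peval_def mon_def
      by (rule arg_cong[where f = sum_list], rule map_cong[OF refl]) (auto dest: len)
    show ?thesis unfolding pr pp
    proof (rule leq_antisym)
      show "(\<Sum>(a, d)\<leftarrow>p. a * mon n (\<lambda>j. d ! j) x) \<preceq> (\<Sum>(a, d)\<leftarrow>p. a * orb n (\<lambda>j. d ! j) x)"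
      proof (rule leq_list_bound)
        fix z assume z: "z \<in> set p"
        obtain a d where ad: "z = (a, d)" by force
        have "mon n (\<lambda>j. d ! j) x \<preceq> orb n (\<lambda>j. d ! j) x"
          using mon_le_orb[OF permutes_id, of n "\<lambda>j. d ! j" x] by simp
        then have "a * mon n (\<lambda>j. d ! j) x \<preceq> a * orb n (\<lambda>j. d ! j) x"
          by (metis leq_mult mult.commute)
        also have "\<dots> \<preceq> (\<Sum>(a, d)\<leftarrow>p. a * orb n (\<lambda>j. d ! j) x)"
          using leq_list_term[OF z, of "\<lambda>(a, d). a * orb n (\<lambda>j. d ! j) x"] ad by simp
        finally show "(case z of (a, d) \<Rightarrow> a * mon n (\<lambda>j. d ! j) x) \<preceq> (\<Sum>(a, d)\<leftarrow>p. a * orb n (\<lambda>j. d ! j) x)"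
          using ad by simp
      qed
    next
      show "(\<Sum>(a, d)\<leftarrow>p. a * orb n (\<lambda>j. d ! j) x) \<preceq> (\<Sum>(a, d)\<leftarrow>p. a * mon n (\<lambda>j. d ! j) x)"
      proof (rule leq_list_bound)
        fix z assume z: "z \<in> set p"
        obtain a d where ad: "z = (a, d)" by force
        have zp: "(a, d) \<in> set p" using z ad by simp
        have "a * orb n (\<lambda>j. d ! j) x = (\<Sum>\<sigma>\<in>{\<sigma>. \<sigma> permutes {..<n}}. a * mon n ((\<lambda>j. d ! j) \<circ> \<sigma>) x)"
          unfolding orb_def by (simp add: sum_distrib_left)
        also have "\<dots> \<preceq> (\<Sum>(a, d)\<leftarrow>p. a * mon n (\<lambda>j. d ! j) x)"
        proof (rule leq_sum_bound[OF finite_perms])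
          fix \<sigma> assume "\<sigma> \<in> {\<sigma>. \<sigma> permutes {..<n}}"
          then have sp: "\<sigma> permutes {..<n}" by simp
          define d2 where "d2 = map (\<lambda>j. d ! \<sigma> j) [0..<n]"
          have mem: "(a, d2) \<in> set p"
            using sym zp sp unfolding sym_pexpr_def d2_def by fast
          have "mon n ((\<lambda>j. d ! j) \<circ> \<sigma>) x = mon n (\<lambda>j. d2 ! j) x"
            by (rule mon_cong) (simp add: d2_def)
          then have "a * mon n ((\<lambda>j. d ! j) \<circ> \<sigma>) x = (\<lambda>(a, d). a * mon n (\<lambda>j. d ! j) x) (a, d2)"
            by simp
          also have "\<dots> \<preceq> (\<Sum>(a, d)\<leftarrow>p. a * mon n (\<lambda>j. d ! j) x)"
            by (rule leq_list_term[OF mem])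
          finally show "a * mon n ((\<lambda>j. d ! j) \<circ> \<sigma>) x \<preceq> (\<Sum>(a, d)\<leftarrow>p. a * mon n (\<lambda>j. d ! j) x)" .
        qed
        finally show "(case z of (a, d) \<Rightarrow> a * orb n (\<lambda>j. d ! j) x) \<preceq> (\<Sum>(a, d)\<leftarrow>p. a * mon n (\<lambda>j. d ! j) x)"
          using ad by simp
      qed
    qed
  qed
  then show "\<exists>r. is_pexpr n r \<and> (\<forall>x. peval p x = peval r (\<lambda>j. esym n (Suc j) x))"
    using isr by blast
qed

end

theorem corollary4p7:
  assumes "idempotent_sr TYPE('a::unital_comm_semiring)"
  shows "fully_elementary TYPE('a) \<longleftrightarrow> frobenius TYPE('a)"
proof -
  interpret idem_sr "TYPE('a)"
    by unfold_locales (use assms in \<open>simp add: idempotent_sr_def\<close>)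
  show ?thesis
  proof
    assume "fully_elementary TYPE('a)"
    then have "n_elementary 2 TYPE('a)" unfolding fully_elementary_def by blast
    then show "frobenius TYPE('a)"
      unfolding frobenius_def using elem2_frob by blast
  next
    assume f: "frobenius TYPE('a)"
    interpret frob_sr "TYPE('a)"
      by unfold_locales (use f in \<open>simp add: frobenius_def\<close>)
    show "fully_elementary TYPE('a)"
      unfolding fully_elementary_def using frob_elementary by blast
  qed
qed

end
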